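(* Let $m>-\tfrac12$ be real and $k$ a (real or complex) number, and let $c_n=\int_{-\infty}^{\infty} e^{-mx^2}e^{ikx}\,\widehat{H}_n(x)\,dx$ for $n\ge 0$, so that $e^{-mx^2}e^{ikx}=\sum_{n\ge0}c_n\widehat{H}_n$. Then for all $n\ge 1$, \[ c_{n+1}=\frac{1}{2m+1}\, ik\sqrt{\frac{2}{n+1}}\,c_n-\frac{2m-1}{2m+1}\sqrt{\frac{n}{n+1}}\,c_{n-1}. \]
   Context: The Hermite polynomials $H_n$ are orthogonal on $\mathbb{R}$ with respect to $e^{-x^2}$, with $\int H_mH_ne^{-x^2}dx=\sqrt{\pi}\,2^n n!\,\delta_{mn}$. The (normalized) Hermite functions are $\widehat{H}_n(x)=\frac{1}{\pi^{1/4}\sqrt{2^n n!}}e^{-x^2/2}H_n(x)$, $n\ge0$; they form an orthonormal basis of $L^2(\mathbb{R})$. *)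

theory Defs
  imports "HOL-Analysis.Analysis"
begin

text \<open>Physicists' Hermite polynomials: H_0 = 1, H_1 = 2x,
  H_(n+2) = 2x H_(n+1) - 2(n+1) H_n; orthogonal w.r.t. exp(-x^2) with
  squared norm sqrt(pi) 2^n n!.\<close>
fun hermite :: "nat \<Rightarrow> real \<Rightarrow> real" where
  "hermite 0 x = 1"
| "hermite (Suc 0) x = 2 * x"
| "hermite (Suc (Suc n)) x = 2 * x * hermite (Suc n) x - 2 * real (Suc n) * hermite n x"

definition hermite_fun :: "nat \<Rightarrow> real \<Rightarrow> real" where
  "hermite_fun n x = exp (- x\<^sup>2 / 2) * hermite n x / (pi powr (1/4) * sqrt (2 ^ n * fact n))"

definition hcoeff :: "real \<Rightarrow> complex \<Rightarrow> nat \<Rightarrow> complex" where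
  "hcoeff m k n = (LINT x|lborel. exp (- complex_of_real (m * x\<^sup>2)) * exp (\<i> * k * complex_of_real x)
                    * complex_of_real (hermite_fun n x))"

end

theory Submission
  imports Defs "HOL-Probability.Distributions" "HOL-Real_Asymp.Real_Asymp"
begin


lemma hermite_deriv: "(hermite n has_real_derivative (2 * real n * hermite (n - 1) x)) (at x)"
proof (induction n x rule: hermite.induct)
  case (1 x) then show ?case by (simp add: fun_eq_iff[symmetric])
next
  case (2 x)
  have "hermite (Suc 0) = (\<lambda>x. 2 * x)" by auto
  then show ?case by (auto intro!: derivative_eq_intros)
next
  case (3 n x)
  have e: "hermite (Suc (Suc n)) = (\<lambda>x. 2 * x * hermite (Suc n) x - 2 * real (Suc n) * hermite n x)"
    by auto
  have r: "hermite (Suc n) x = 2 * x * hermite n x - 2 * real n * hermite (n - 1) x"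
    by (cases n) auto
  show ?case unfolding e
    apply (rule derivative_eq_intros refl 3)+
    apply (simp add: r algebra_simps)
    done
qed

lemma isCont_hermite: "isCont (hermite n) x"
  using hermite_deriv DERIV_isCont by blast

lemma continuous_on_hermite: "continuous_on A (hermite n)"
  by (simp add: continuous_at_imp_continuous_on isCont_hermite)

lemma hermite_bound_aux:
  "(\<exists>C\<ge>0. \<forall>x. \<bar>hermite n x\<bar> \<le> C * (1 + \<bar>x\<bar>) ^ n) \<and>
   (\<exists>C\<ge>0. \<forall>x. \<bar>hermite (Suc n) x\<bar> \<le> C * (1 + \<bar>x\<bar>) ^ (Suc n))"
proof (induction n)
  case 0
  show ?case by (auto intro!: exI[of _ 2] simp: abs_mult)
next
  case (Suc n)
  then obtain A B where A: "A \<ge> 0" "\<And>x. \<bar>hermite (Suc n) x\<bar> \<le> A * (1 + \<bar>x\<bar>) ^ (Suc n)"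
    and B: "B \<ge> 0" "\<And>x. \<bar>hermite n x\<bar> \<le> B * (1 + \<bar>x\<bar>) ^ n" by blast
  have "\<bar>hermite (Suc (Suc n)) x\<bar> \<le> (2 * A + 2 * (n+1) * B) * (1 + \<bar>x\<bar>) ^ (Suc (Suc n))" for x
  proof -
    define y where "y = 1 + \<bar>x\<bar>"
    have y1: "y \<ge> 1" "\<bar>x\<bar> \<le> y" by (auto simp: y_def)
    have p: "y ^ n \<le> y ^ Suc (Suc n)" using y1 by (intro power_increasing) auto
    have "\<bar>hermite (Suc (Suc n)) x\<bar> \<le> 2 * \<bar>x\<bar> * \<bar>hermite (Suc n) x\<bar> + 2 * (n+1) * \<bar>hermite n x\<bar>"
    proof -
      have "\<bar>hermite (Suc (Suc n)) x\<bar> = \<bar>2 * x * hermite (Suc n) x - 2 * (n+1) * hermite n x\<bar>"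
        by simp
      also have "\<dots> \<le> \<bar>2 * x * hermite (Suc n) x\<bar> + \<bar>2 * (n+1) * hermite n x\<bar>"
        by (rule abs_triangle_ineq4)
      also have "\<dots> = 2 * \<bar>x\<bar> * \<bar>hermite (Suc n) x\<bar> + 2 * (n+1) * \<bar>hermite n x\<bar>"
        by (simp add: abs_mult)
      finally show ?thesis .
    qed
    also have "\<dots> \<le> 2 * y * (A * y ^ Suc n) + 2 * (n+1) * (B * y ^ n)"
      using A(2)[of x] B(2)[of x] y1 A(1) B(1) unfolding y_def
      by (intro add_mono mult_mono) auto
    also have "\<dots> \<le> 2 * y * (A * y ^ Suc n) + 2 * (n+1) * (B * y ^ Suc (Suc n))"
      using p B(1) A(1) y1 by (intro add_mono mult_left_mono) auto
    also have "\<dots> = (2 * A + 2 * (n+1) * B) * y ^ (Suc (Suc n))" by (simp add: algebra_simps)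
    finally show ?thesis unfolding y_def .
  qed
  then have "\<exists>C\<ge>0. \<forall>x. \<bar>hermite (Suc (Suc n)) x\<bar> \<le> C * (1 + \<bar>x\<bar>) ^ (Suc (Suc n))"
    using A(1) B(1) by (intro exI[of _ "2 * A + 2 * (n+1) * B"]) auto
  then show ?case using A by blast
qed

lemma hermite_bound: "\<exists>C\<ge>0. \<forall>x. \<bar>hermite n x\<bar> \<le> C * (1 + \<bar>x\<bar>) ^ n"
  using hermite_bound_aux by blast

lemma one_plus_pow_le: "(1 + \<bar>x::real\<bar>) ^ N \<le> 2 ^ N * (1 + \<bar>x\<bar> ^ N)"
proof (cases "\<bar>x\<bar> \<le> 1")
  case True
  have "(1 + \<bar>x\<bar>) ^ N \<le> 2 ^ N" using True by (intro power_mono) auto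
  also have "\<dots> \<le> 2 ^ N * (1 + \<bar>x\<bar> ^ N)" by simp
  finally show ?thesis .
next
  case False
  have "(1 + \<bar>x\<bar>) ^ N \<le> (2 * \<bar>x\<bar>) ^ N" using False by (intro power_mono) auto
  also have "\<dots> \<le> 2 ^ N * (1 + \<bar>x\<bar> ^ N)" by (simp add: power_mult_distrib)
  finally show ?thesis .
qed

lemma exp_complete_square:
  assumes "a > (0::real)"
  shows "exp (- a * x\<^sup>2 + b * \<bar>x\<bar>) \<le> exp (b\<^sup>2 / (2 * a)) * exp (- (a / 2) * x\<^sup>2)"
proof -
  have "0 \<le> (a * \<bar>x\<bar> - b)\<^sup>2 / (2 * a)" using assms by simp
  also have "(a * \<bar>x\<bar> - b)\<^sup>2 / (2 * a) = b\<^sup>2 / (2 * a) - (a / 2) * x\<^sup>2 + a * x\<^sup>2 - b * \<bar>x\<bar>"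
    using assms by (simp add: field_simps power2_eq_square)
  finally have "- a * x\<^sup>2 + b * \<bar>x\<bar> \<le> b\<^sup>2 / (2 * a) + (- (a / 2) * x\<^sup>2)" by simp
  then show ?thesis by (simp add: exp_add[symmetric])
qed

lemma gauss_dom_integrable:
  assumes "a > (0::real)"
  shows "integrable lborel (\<lambda>x. (1 + \<bar>x\<bar> ^ N) * exp (- (a / 2) * x\<^sup>2))"
proof -
  define \<sigma> where "\<sigma> = 1 / sqrt a"
  have \<sigma>: "\<sigma> > 0" using assms by (simp add: \<sigma>_def)
  have s2: "\<sigma>\<^sup>2 = 1 / a" using assms by (simp add: \<sigma>_def power_divide)
  have "integrable lborel (\<lambda>x. sqrt (2 * pi * \<sigma>\<^sup>2) * (normal_density 0 \<sigma> x + normal_density 0 \<sigma> x * \<bar>x - 0\<bar> ^ N))"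
    using integrable_normal_density[OF \<sigma>, of 0] integrable_normal_moment_abs[OF \<sigma>, of 0 N]
    by (intro integrable_mult_right integrable_add) auto
  also have "(\<lambda>x. sqrt (2 * pi * \<sigma>\<^sup>2) * (normal_density 0 \<sigma> x + normal_density 0 \<sigma> x * \<bar>x - 0\<bar> ^ N))
      = (\<lambda>x. (1 + \<bar>x\<bar> ^ N) * exp (- (a / 2) * x\<^sup>2))"
    using \<sigma> assms by (auto simp: normal_density_def s2 fun_eq_iff field_simps)
  finally show ?thesis .
qed

lemma gauss_integrable:
  fixes f :: "real \<Rightarrow> complex"
  assumes a: "a > 0" and c: "continuous_on UNIV f"
    and bd: "\<And>x. norm (f x) \<le> C * (1 + \<bar>x\<bar>) ^ N * exp (- a * x\<^sup>2 + b * \<bar>x\<bar>)"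
  shows "integrable lborel f"
proof (rule Bochner_Integration.integrable_bound[where f="\<lambda>x. (C * 2 ^ N * exp (b\<^sup>2 / (2 * a))) * ((1 + \<bar>x\<bar> ^ N) * exp (- (a / 2) * x\<^sup>2))"])
  show "integrable lborel (\<lambda>x. (C * 2 ^ N * exp (b\<^sup>2 / (2 * a))) * ((1 + \<bar>x\<bar> ^ N) * exp (- (a / 2) * x\<^sup>2)))"
    using gauss_dom_integrable[OF a] by (intro integrable_mult_right)
  show "f \<in> borel_measurable lborel"
    using borel_measurable_continuous_onI[OF c] by simp
  show "AE x in lborel. norm (f x) \<le> norm ((C * 2 ^ N * exp (b\<^sup>2 / (2 * a))) * ((1 + \<bar>x\<bar> ^ N) * exp (- (a / 2) * x\<^sup>2)))"
  proof (intro AE_I2)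
    fix x :: real
    have C: "C \<ge> 0" using bd[of 0] by simp (meson norm_ge_zero order_trans)
    have "norm (f x) \<le> C * (1 + \<bar>x\<bar>) ^ N * exp (- a * x\<^sup>2 + b * \<bar>x\<bar>)" by (rule bd)
    also have "\<dots> \<le> C * (2 ^ N * (1 + \<bar>x\<bar> ^ N)) * (exp (b\<^sup>2 / (2 * a)) * exp (- (a / 2) * x\<^sup>2))"
      using C one_plus_pow_le[of x N] exp_complete_square[OF a, of x b]
      by (intro mult_mono) auto
    also have "\<dots> = norm ((C * 2 ^ N * exp (b\<^sup>2 / (2 * a))) * ((1 + \<bar>x\<bar> ^ N) * exp (- (a / 2) * x\<^sup>2)))"
      using C by (simp add: abs_mult)
    finally show "norm (f x) \<le> norm ((C * 2 ^ N * exp (b\<^sup>2 / (2 * a))) * ((1 + \<bar>x\<bar> ^ N) * exp (- (a / 2) * x\<^sup>2)))" .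
  qed
qed

lemma gauss_tendsto:
  fixes f :: "real \<Rightarrow> complex"
  assumes a: "a > 0"
    and bd: "\<And>x. norm (f x) \<le> C * (1 + \<bar>x\<bar>) ^ N * exp (- a * x\<^sup>2 + b * \<bar>x\<bar>)"
  shows "(f \<longlongrightarrow> 0) at_top" "(f \<longlongrightarrow> 0) at_bot"
proof -
  have le: "norm (f x) \<le> (C * 2 ^ N * exp (b\<^sup>2 / (2 * a))) * ((1 + \<bar>x\<bar> ^ N) * exp (- (a / 2) * x\<^sup>2))" for x
  proof -
    have C: "C \<ge> 0" using bd[of 0] by simp (meson norm_ge_zero order_trans)
    have "norm (f x) \<le> C * (1 + \<bar>x\<bar>) ^ N * exp (- a * x\<^sup>2 + b * \<bar>x\<bar>)" by (rule bd)
    also have "\<dots> \<le> C * (2 ^ N * (1 + \<bar>x\<bar> ^ N)) * (exp (b\<^sup>2 / (2 * a)) * exp (- (a / 2) * x\<^sup>2))"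
      using C one_plus_pow_le[of x N] exp_complete_square[OF a, of x b]
      by (intro mult_mono) auto
    finally show ?thesis by (simp add: algebra_simps)
  qed
  have l1: "((\<lambda>x. (1 + \<bar>x\<bar> ^ N) * exp (- (a / 2) * x\<^sup>2)) \<longlongrightarrow> 0) at_top"
    using a by real_asymp
  have l2: "((\<lambda>x. (1 + \<bar>x\<bar> ^ N) * exp (- (a / 2) * x\<^sup>2)) \<longlongrightarrow> 0) at_bot"
    using a by real_asymp
  show "(f \<longlongrightarrow> 0) at_top"
    by (rule tendsto_norm_zero_cancel, rule tendsto_sandwich[of "\<lambda>_. 0" _ _ "\<lambda>x. (C * 2 ^ N * exp (b\<^sup>2 / (2 * a))) * ((1 + \<bar>x\<bar> ^ N) * exp (- (a / 2) * x\<^sup>2))"])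
      (use le l1 tendsto_mult_right_zero in auto)
  show "(f \<longlongrightarrow> 0) at_bot"
    by (rule tendsto_norm_zero_cancel, rule tendsto_sandwich[of "\<lambda>_. 0" _ _ "\<lambda>x. (C * 2 ^ N * exp (b\<^sup>2 / (2 * a))) * ((1 + \<bar>x\<bar> ^ N) * exp (- (a / 2) * x\<^sup>2))"])
      (use le l2 tendsto_mult_right_zero in auto)
qed



lemma final_alg0:
  fixes I0 I1 I2 J ik N S T M q :: complex
  assumes "N \<noteq> 0" "S \<noteq> 0" "T \<noteq> 0" "M \<noteq> 0" "q = S * S"
    and "I2 = 2 * J - q * I0"
    and "M * J = ik * I1 + q * I0"
  shows "I2 / (N * S * T) = 1 / M * (ik * (2 / T)) * (I1 / (N * S))
     - ((M - 2) / M * (S / T)) * (I0 / N)"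
proof -
  have J: "J = (ik * I1 + q * I0) / M"
    using assms(7,4) by (simp add: field_simps)
  show ?thesis
    unfolding assms(6) J assms(5) using assms(1-4)
    by (simp add: field_simps)
qed

lemma final_alg:
  fixes I0 I1 I2 J ik :: complex and N0 s t m :: real and p :: nat
  assumes "N0 > 0" "s > 0" "t > 0" "2 * m + 1 > 0" "s\<^sup>2 = 2 * (real p + 1)"
    and "I2 = 2 * J - of_real (2 * (real p + 1)) * I0"
    and "of_real (2 * m + 1) * J = ik * I1 + of_real (2 * (real p + 1)) * I0"
  shows "I2 / of_real (N0 * s * t) = of_real (1 / (2 * m + 1)) * (ik * of_real (2 / t)) * (I1 / of_real (N0 * s))
     - of_real ((2 * m - 1) / (2 * m + 1) * (s / t)) * (I0 / of_real N0)"
proof -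
  have m: "of_real (2 * m + 1) \<noteq> (0::complex)" using assms(4) by (metis of_real_eq_0_iff less_irrefl)
  have s2: "of_real (2 * (real p + 1)) = (of_real s :: complex) * of_real s"
    using assms(5) by (simp add: power2_eq_square flip: of_real_mult)
  have e: "of_real ((2 * m - 1) / (2 * m + 1) * (s / t)) = (of_real (2 * m + 1) - 2) / of_real (2 * m + 1) * (of_real s / (of_real t :: complex))"
    by simp
  have H: "I2 / (of_real N0 * of_real s * of_real t) = 1 / of_real (2 * m + 1) * (ik * (2 / of_real t)) * (I1 / (of_real N0 * of_real s))
     - ((of_real (2 * m + 1) - 2) / of_real (2 * m + 1) * (of_real s / of_real t)) * (I0 / of_real N0)"
    by (rule final_alg0[OF _ _ _ m s2 assms(6) assms(7)]) (use assms in auto)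
  show ?thesis
    by (subst e) (use H in simp)
qed



lemma main_analysis:
  fixes a :: real and k :: complex and p :: nat
  assumes a: "a > 0"
  defines "G \<equiv> \<lambda>x::real. exp (- (complex_of_real a * (complex_of_real x)\<^sup>2) + \<i> * k * complex_of_real x)"
  defines "Q \<equiv> \<lambda>j x. G x * complex_of_real (hermite j x)"
  shows "(\<And>j. integrable lborel (Q j))"
    and "(\<And>j. integrable lborel (\<lambda>x. complex_of_real x * Q j x))"
    and "of_real (2 * a) * (LINT x|lborel. complex_of_real x * Q (Suc p) x)
         = \<i> * k * (LINT x|lborel. Q (Suc p) x) + of_real (2 * (real p + 1)) * (LINT x|lborel. Q p x)"
    and "(LINT x|lborel. Q (Suc (Suc p)) x) = 2 * (LINT x|lborel. complex_of_real x * Q (Suc p) x)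
         - of_real (2 * (real p + 1)) * (LINT x|lborel. Q p x)"
proof -
  define b where "b = \<bar>Im k\<bar>"
  have normG: "norm (G x) \<le> exp (- a * x\<^sup>2 + b * \<bar>x\<bar>)" for x
  proof -
    have "norm (G x) = exp (- a * x\<^sup>2 - Im k * x)"
      by (simp add: G_def norm_exp_eq_Re power2_eq_square)
    also have "\<dots> \<le> exp (- a * x\<^sup>2 + b * \<bar>x\<bar>)"
      unfolding b_def by (simp add: abs_mult[symmetric])
    finally show ?thesis .
  qed
  have contG: "continuous_on UNIV G"
    unfolding G_def by (intro continuous_intros)
  have contQ: "continuous_on UNIV (Q j)" for j
    unfolding Q_def by (intro continuous_intros contG continuous_on_hermite)
  have contX: "continuous_on UNIV (\<lambda>x. complex_of_real x * Q j x)" for j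
    by (intro continuous_intros contQ)
  have bdQ: "\<exists>C. \<forall>x. norm (Q j x) \<le> C * (1 + \<bar>x\<bar>) ^ j * exp (- a * x\<^sup>2 + b * \<bar>x\<bar>)" for j
  proof -
    obtain C where C: "C \<ge> 0" "\<And>x. \<bar>hermite j x\<bar> \<le> C * (1 + \<bar>x\<bar>) ^ j" using hermite_bound by blast
    have "norm (Q j x) \<le> C * (1 + \<bar>x\<bar>) ^ j * exp (- a * x\<^sup>2 + b * \<bar>x\<bar>)" for x
    proof -
      have "norm (Q j x) = norm (G x) * \<bar>hermite j x\<bar>" by (simp add: Q_def norm_mult)
      also have "\<dots> \<le> exp (- a * x\<^sup>2 + b * \<bar>x\<bar>) * (C * (1 + \<bar>x\<bar>) ^ j)"
        by (intro mult_mono normG C) auto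
      finally show ?thesis by (simp add: mult_ac)
    qed
    then show ?thesis by blast
  qed
  have bdX: "\<exists>C. \<forall>x. norm (complex_of_real x * Q j x) \<le> C * (1 + \<bar>x\<bar>) ^ Suc j * exp (- a * x\<^sup>2 + b * \<bar>x\<bar>)" for j
  proof -
    obtain C where C: "\<And>x. norm (Q j x) \<le> C * (1 + \<bar>x\<bar>) ^ j * exp (- a * x\<^sup>2 + b * \<bar>x\<bar>)"
      using bdQ by blast
    have "norm (complex_of_real x * Q j x) \<le> C * (1 + \<bar>x\<bar>) ^ Suc j * exp (- a * x\<^sup>2 + b * \<bar>x\<bar>)" for x
    proof -
      have "norm (complex_of_real x * Q j x) = \<bar>x\<bar> * norm (Q j x)" by (simp add: norm_mult)
      also have "\<dots> \<le> (1 + \<bar>x\<bar>) * (C * (1 + \<bar>x\<bar>) ^ j * exp (- a * x\<^sup>2 + b * \<bar>x\<bar>))"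
        by (intro mult_mono C) auto
      finally show ?thesis by (simp add: mult_ac)
    qed
    then show ?thesis by blast
  qed
  show intQ: "integrable lborel (Q j)" for j
    using bdQ[of j] gauss_integrable[OF a contQ] by blast
  show intX: "integrable lborel (\<lambda>x. complex_of_real x * Q j x)" for j
    using bdX[of j] gauss_integrable[OF a contX] by blast
  have limQ: "(Q j \<longlongrightarrow> 0) at_top" "(Q j \<longlongrightarrow> 0) at_bot" for j
    using bdQ[of j] gauss_tendsto[OF a] by blast+
  define Q' where "Q' = (\<lambda>x. - of_real (2 * a) * (complex_of_real x * Q (Suc p) x) + \<i> * k * Q (Suc p) x
        + of_real (2 * (real p + 1)) * Q p x)"
  have derQ: "(Q (Suc p) has_vector_derivative Q' x) (at x)" for x
  proof -
    have dG: "(G has_vector_derivative (G x * (- (of_real a * (2 * of_real x)) + \<i> * k))) (at x)"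
    proof -
      have "((\<lambda>z. exp (- (complex_of_real a * z\<^sup>2) + \<i> * k * z)) has_field_derivative
          (exp (- (complex_of_real a * (complex_of_real x)\<^sup>2) + \<i> * k * complex_of_real x) * (- (of_real a * (2 * of_real x)) + \<i> * k))) (at (of_real x))"
        by (auto intro!: derivative_eq_intros simp: algebra_simps)
      from has_vector_derivative_real_field[OF this] show ?thesis unfolding G_def by simp
    qed
    have dH: "((\<lambda>x. complex_of_real (hermite (Suc p) x)) has_vector_derivative
                of_real (2 * real (Suc p) * hermite p x)) (at x)"
      using has_vector_derivative_of_real[OF hermite_deriv[of "Suc p" x]] by simp
    have "(Q (Suc p) has_vector_derivative
            (G x * of_real (2 * real (Suc p) * hermite p x) + (G x * (- (of_real a * (2 * of_real x)) + \<i> * k)) * of_real (hermite (Suc p) x))) (at x)"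
      unfolding Q_def using has_vector_derivative_mult[OF dG dH] by simp
    moreover have "G x * of_real (2 * real (Suc p) * hermite p x) + (G x * (- (of_real a * (2 * of_real x)) + \<i> * k)) * of_real (hermite (Suc p) x) = Q' x"
      unfolding Q'_def Q_def by (simp add: algebra_simps)
    ultimately show ?thesis by simp
  qed
  have contQ': "isCont Q' x" for x
    unfolding Q'_def using contQ contX by (intro continuous_intros) (auto simp: continuous_on_eq_continuous_at)
  have intQ': "integrable lborel Q'"
    unfolding Q'_def by (intro Bochner_Integration.integrable_add integrable_mult_right intQ intX)
  have "(LBINT x=-\<infinity>..\<infinity>. Q' x) = 0 - 0"
  proof (rule interval_integral_FTC_integrable[where F="Q (Suc p)"])
    show "set_integrable lborel (einterval (- \<infinity>) \<infinity>) Q'"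
      using intQ' by (simp add: set_integrable_def)
    show "((Q (Suc p) \<circ> real_of_ereal) \<longlongrightarrow> 0) (at_right (- \<infinity>))"
      using limQ by (simp add: ereal_tendsto_simps1)
    show "((Q (Suc p) \<circ> real_of_ereal) \<longlongrightarrow> 0) (at_left \<infinity>)"
      using limQ by (simp add: ereal_tendsto_simps1)
  qed (use derQ contQ' in auto)
  then have "(LINT x|lborel. Q' x) = 0"
    by (simp add: interval_lebesgue_integral_def set_lebesgue_integral_def)
  then show "of_real (2 * a) * (LINT x|lborel. complex_of_real x * Q (Suc p) x)
         = \<i> * k * (LINT x|lborel. Q (Suc p) x) + of_real (2 * (real p + 1)) * (LINT x|lborel. Q p x)"
  proof -
    have i1: "integrable lborel (\<lambda>x. - of_real (2 * a) * (complex_of_real x * Q (Suc p) x) + \<i> * k * Q (Suc p) x)"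
      by (intro Bochner_Integration.integrable_add integrable_mult_right intQ intX)
    have "(LINT x|lborel. Q' x) = - of_real (2 * a) * (LINT x|lborel. complex_of_real x * Q (Suc p) x)
       + \<i> * k * (LINT x|lborel. Q (Suc p) x) + of_real (2 * (real p + 1)) * (LINT x|lborel. Q p x)"
      unfolding Q'_def
      by (simp add: Bochner_Integration.integral_add[OF i1] Bochner_Integration.integral_add
         integrable_mult_right intQ intX integral_mult_right_zero del: of_real_mult)
    with \<open>(LINT x|lborel. Q' x) = 0\<close> show ?thesis by (simp add: algebra_simps del: of_real_mult)
  qed
  have "Q (Suc (Suc p)) = (\<lambda>x. 2 * (complex_of_real x * Q (Suc p) x) - of_real (2 * (real p + 1)) * Q p x)"
    by (auto simp: Q_def fun_eq_iff algebra_simps)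
  then show "(LINT x|lborel. Q (Suc (Suc p)) x) = 2 * (LINT x|lborel. complex_of_real x * Q (Suc p) x)
         - of_real (2 * (real p + 1)) * (LINT x|lborel. Q p x)"
    using intQ intX by (simp add: Bochner_Integration.integral_diff integrable_mult_right integral_mult_right_zero del: of_real_mult)
qed


lemma hcoeff_eq:
  fixes m :: real and k :: complex
  shows "hcoeff m k j = (LINT x|lborel. exp (- (complex_of_real (m + 1/2) * (complex_of_real x)\<^sup>2) + \<i> * k * complex_of_real x)
            * complex_of_real (hermite j x)) / of_real (pi powr (1/4) * sqrt (2 ^ j * fact j))"
proof -
  have "exp (- complex_of_real (m * x\<^sup>2)) * exp (\<i> * k * complex_of_real x) * complex_of_real (hermite_fun j x)
      = exp (- (complex_of_real (m + 1/2) * (complex_of_real x)\<^sup>2) + \<i> * k * complex_of_real x)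
            * complex_of_real (hermite j x) / of_real (pi powr (1/4) * sqrt (2 ^ j * fact j))" for x
  proof -
    have e: "exp (- complex_of_real (m * x\<^sup>2)) * exp (\<i> * k * complex_of_real x) * complex_of_real (exp (- x\<^sup>2 / 2))
        = exp (- (complex_of_real (m + 1/2) * (complex_of_real x)\<^sup>2) + \<i> * k * complex_of_real x)"
      unfolding exp_of_real[symmetric] exp_add[symmetric] by (rule arg_cong[where f=exp]) (simp add: algebra_simps)
    have "exp (- complex_of_real (m * x\<^sup>2)) * exp (\<i> * k * complex_of_real x) * complex_of_real (hermite_fun j x)
       = (exp (- complex_of_real (m * x\<^sup>2)) * exp (\<i> * k * complex_of_real x) * complex_of_real (exp (- x\<^sup>2 / 2)))
          * complex_of_real (hermite j x) / of_real (pi powr (1/4) * sqrt (2 ^ j * fact j))"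
      unfolding hermite_fun_def of_real_mult of_real_divide by (simp add: mult_ac)
    then show ?thesis unfolding e .
  qed
  then show ?thesis unfolding hcoeff_def by (simp add: integral_divide_zero)
qed

theorem lemma2p1:
  fixes m :: real and k :: complex and n :: nat
  assumes "m > - 1/2" and "n \<ge> 1"
  shows "hcoeff m k (n + 1) =
           1 / (2 * m + 1) * (\<i> * k * sqrt (2 / real (n + 1))) * hcoeff m k n
         - (2 * m - 1) / (2 * m + 1) * sqrt (real n / real (n + 1)) * hcoeff m k (n - 1)"
proof -
  obtain p where n: "n = Suc p" using assms(2) by (cases n) auto
  define a where "a = m + 1/2"
  have a: "a > 0" using assms(1) by (simp add: a_def)
  define G where "G = (\<lambda>x::real. exp (- (complex_of_real a * (complex_of_real x)\<^sup>2) + \<i> * k * complex_of_real x))"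
  define Q where "Q = (\<lambda>j x. G x * complex_of_real (hermite j x))"
  define I where "I = (\<lambda>j. LINT x|lborel. Q j x)"
  define J where "J = (LINT x|lborel. complex_of_real x * Q (Suc p) x)"
  define N where "N = (\<lambda>j::nat. pi powr (1/4) * sqrt (2 ^ j * fact j))"
  have hc: "hcoeff m k j = I j / of_real (N j)" for j
    unfolding hcoeff_eq I_def Q_def G_def N_def a_def by simp
  note MA = main_analysis[OF a, of k p]
  have eq1: "of_real (2 * a) * J = \<i> * k * I (Suc p) + of_real (2 * (real p + 1)) * I p"
    using MA(3) unfolding I_def J_def Q_def G_def by simp
  have eq2: "I (Suc (Suc p)) = 2 * J - of_real (2 * (real p + 1)) * I p"
    using MA(4) unfolding I_def J_def Q_def G_def by simp
  define s where "s = sqrt (2 * (real p + 1))"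
  define t where "t = sqrt (2 * (real p + 2))"
  have Npos: "N p > 0" unfolding N_def by simp
  have N1: "N (Suc p) = N p * s"
  proof -
    have "(2 ^ Suc p * fact (Suc p) :: real) = (2 ^ p * fact p) * (2 * (real p + 1))"
      by (simp add: algebra_simps)
    then show ?thesis unfolding N_def s_def by (simp only: real_sqrt_mult mult.assoc)
  qed
  have N2: "N (Suc (Suc p)) = N p * s * t"
  proof -
    have "(2 ^ Suc (Suc p) * fact (Suc (Suc p)) :: real) = (2 ^ Suc p * fact (Suc p)) * (2 * (real p + 2))"
      by (simp add: algebra_simps)
    then have "N (Suc (Suc p)) = N (Suc p) * t"
      unfolding N_def t_def by (simp only: real_sqrt_mult mult.assoc)
    then show ?thesis using N1 by simp
  qed
  have sp: "s > 0" "t > 0" unfolding s_def t_def by auto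
  have s2: "s\<^sup>2 = 2 * (real p + 1)" unfolding s_def by simp
  have sq1: "sqrt (2 / real (n + 1)) = 2 / t"
  proof -
    have "(2 / t)\<^sup>2 = 2 / real (n + 1)" unfolding t_def n by (simp add: power_divide field_simps)
    then show ?thesis using sp by (metis real_sqrt_abs abs_of_pos divide_pos_pos zero_less_numeral)
  qed
  have sq2: "sqrt (real n / real (n + 1)) = s / t"
    unfolding s_def t_def n by (simp add: real_sqrt_divide[symmetric] field_simps)
  have 2: "2 * m + 1 > 0" using assms(1) by simp
  have "I (Suc (Suc p)) / of_real (N p * s * t) = of_real (1 / (2 * m + 1)) * (\<i> * k * of_real (2 / t)) * (I (Suc p) / of_real (N p * s))
     - of_real ((2 * m - 1) / (2 * m + 1) * (s / t)) * (I p / of_real (N p))"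
    by (rule final_alg[OF Npos sp 2 s2 eq2]) (use eq1 in \<open>simp add: a_def\<close>)
  then show ?thesis
    unfolding hc n sq1 [unfolded n] sq2 [unfolded n] N1 N2
    by (simp add: mult.assoc N2)
qed

end
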